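(* Let $K$ be a finite group, $N\trianglelefteq K$, and $H=\Delta_K(1\times N)=\{(gn,g):g\in K,n\in N\}\le K\times K$. Then every cohomology class in $H^2(H;\mathbb{T})$ contains a cocycle $\psi$ satisfying, for all $g,k\in K$ and $n,m\in N$, $$\psi((gn,g),(km,k))=\overline{\beta^{\psi}_{(k,k)}((n,1))}\,\psi((n^k,1),(m,1))\,\psi((g,g),(k,k)).$$
   Context: $n^k=k^{-1}nk$. For $\psi\in Z^2(X;\mathbb{T})$ on a group $X$, $\beta^\psi_x(y)=\psi(x,x^{-1}yx)\,\overline{\psi(y,x)}$. *)

theory Defs
  imports Complex_Main "HOL-Algebra.Algebra"
begin

definition cocycle2 :: "('g, 'b) monoid_scheme \<Rightarrow> ('g \<Rightarrow> 'g \<Rightarrow> complex) \<Rightarrow> bool" where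
  "cocycle2 G \<psi> \<longleftrightarrow>
     (\<forall>x\<in>carrier G. \<forall>y\<in>carrier G. cmod (\<psi> x y) = 1) \<and>
     (\<forall>x\<in>carrier G. \<forall>y\<in>carrier G. \<forall>z\<in>carrier G.
        \<psi> x y * \<psi> (x \<otimes>\<^bsub>G\<^esub> y) z = \<psi> x (y \<otimes>\<^bsub>G\<^esub> z) * \<psi> y z)"

definition cohomologous :: "('g, 'b) monoid_scheme \<Rightarrow> ('g \<Rightarrow> 'g \<Rightarrow> complex) \<Rightarrow> ('g \<Rightarrow> 'g \<Rightarrow> complex) \<Rightarrow> bool" where
  "cohomologous G \<omega> \<psi> \<longleftrightarrow>
     (\<exists>\<mu>. (\<forall>x\<in>carrier G. cmod (\<mu> x) = 1) \<and>
          (\<forall>x\<in>carrier G. \<forall>y\<in>carrier G.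
             \<psi> x y = \<omega> x y * \<mu> x * \<mu> y / \<mu> (x \<otimes>\<^bsub>G\<^esub> y)))"

definition beta :: "('g, 'b) monoid_scheme \<Rightarrow> ('g \<Rightarrow> 'g \<Rightarrow> complex) \<Rightarrow> 'g \<Rightarrow> 'g \<Rightarrow> complex" where
  "beta G \<psi> x y = \<psi> x (inv\<^bsub>G\<^esub> x \<otimes>\<^bsub>G\<^esub> y \<otimes>\<^bsub>G\<^esub> x) * cnj (\<psi> y x)"

end

theory Submission
  imports Defs
begin

lemma coboundary_cocycle:
  fixes G (structure)
  assumes G: "group G" and om: "cocycle2 G \<omega>" and mu: "\<forall>x\<in>carrier G. cmod (\<mu> x) = 1"
  shows "cocycle2 G (\<lambda>x y. \<omega> x y * \<mu> x * \<mu> y / \<mu> (x \<otimes>\<^bsub>G\<^esub> y))"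
proof -
  interpret group G by (rule G)
  have nz: "\<And>x. x \<in> carrier G \<Longrightarrow> \<mu> x \<noteq> 0" using mu by force
  show ?thesis unfolding cocycle2_def
  proof (intro conjI ballI)
    fix x y assume "x \<in> carrier G" "y \<in> carrier G"
    then show "cmod (\<omega> x y * \<mu> x * \<mu> y / \<mu> (x \<otimes> y)) = 1"
      using om mu unfolding cocycle2_def by (simp add: norm_mult norm_divide)
  next
    fix x y z assume xyz: "x \<in> carrier G" "y \<in> carrier G" "z \<in> carrier G"
    have c: "\<omega> x y * \<omega> (x \<otimes> y) z = \<omega> x (y \<otimes> z) * \<omega> y z"
      using om xyz unfolding cocycle2_def by blast
    have n1: "\<mu> (x \<otimes> y) \<noteq> 0" "\<mu> (y \<otimes> z) \<noteq> 0" "\<mu> (x \<otimes> y \<otimes> z) \<noteq> 0"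
      using nz xyz by auto
    have a: "x \<otimes> (y \<otimes> z) = x \<otimes> y \<otimes> z" using xyz by (simp add: m_assoc)
    show "\<omega> x y * \<mu> x * \<mu> y / \<mu> (x \<otimes> y) *
          (\<omega> (x \<otimes> y) z * \<mu> (x \<otimes> y) * \<mu> z / \<mu> (x \<otimes> y \<otimes> z)) =
          \<omega> x (y \<otimes> z) * \<mu> x * \<mu> (y \<otimes> z) / \<mu> (x \<otimes> (y \<otimes> z)) *
          (\<omega> y z * \<mu> y * \<mu> z / \<mu> (y \<otimes> z))"
      unfolding a using n1 c by (simp add: field_simps)
  qed
qed

lemma main_lemma:
  fixes K :: "('a, 'b) monoid_scheme" (structure) and N :: "'a set" and H :: "('a \<times> 'a) monoid"
  assumes "group K" and "N \<lhd> K"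
  defines "H \<equiv> (K \<times>\<times> K)\<lparr>carrier := {(g \<otimes>\<^bsub>K\<^esub> n, g) | g n. g \<in> carrier K \<and> n \<in> N}\<rparr>"
  shows "\<forall>\<omega>. cocycle2 H \<omega> \<longrightarrow>
           (\<exists>\<psi>. cocycle2 H \<psi> \<and> cohomologous H \<omega> \<psi> \<and>
              (\<forall>g\<in>carrier K. \<forall>k\<in>carrier K. \<forall>n\<in>N. \<forall>m\<in>N.
                 \<psi> (g \<otimes>\<^bsub>K\<^esub> n, g) (k \<otimes>\<^bsub>K\<^esub> m, k)
                 = cnj (beta H \<psi> (k, k) (n, \<one>\<^bsub>K\<^esub>))
                   * \<psi> (inv\<^bsub>K\<^esub> k \<otimes>\<^bsub>K\<^esub> n \<otimes>\<^bsub>K\<^esub> k, \<one>\<^bsub>K\<^esub>) (m, \<one>\<^bsub>K\<^esub>)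
                   * \<psi> (g, g) (k, k)))"
proof -
  interpret group K by (rule assms(1))
  have sub: "subgroup N K" using assms(2) normal_imp_subgroup by blast
  have NK: "N \<subseteq> carrier K" using sub subgroup.subset by blast
  have Nm: "\<And>a b. a \<in> N \<Longrightarrow> b \<in> N \<Longrightarrow> a \<otimes> b \<in> N" by (rule subgroup.m_closed[OF sub])
  have Ni: "\<And>a. a \<in> N \<Longrightarrow> inv a \<in> N" by (rule subgroup.m_inv_closed[OF sub])
  have N1: "\<one> \<in> N" by (rule subgroup.one_closed[OF sub])
  have Nc: "\<And>x h. x \<in> carrier K \<Longrightarrow> h \<in> N \<Longrightarrow> x \<otimes> h \<otimes> inv x \<in> N"
    by (rule normal.inv_op_closed2[OF assms(2)])
  have Nc': "\<And>x h. x \<in> carrier K \<Longrightarrow> h \<in> N \<Longrightarrow> inv x \<otimes> (h \<otimes> x) \<in> N"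
  proof -
    fix x h assume x: "x \<in> carrier K" and h: "h \<in> N"
    have "inv x \<otimes> h \<otimes> x \<in> N" by (rule normal.inv_op_closed1[OF assms(2) x h])
    moreover have "inv x \<otimes> h \<otimes> x = inv x \<otimes> (h \<otimes> x)" using x h NK by (simp add: m_assoc subsetD)
    ultimately show "inv x \<otimes> (h \<otimes> x) \<in> N" by simp
  qed
  have c1: "\<And>x y. x \<in> carrier K \<Longrightarrow> y \<in> carrier K \<Longrightarrow> x \<otimes> (inv x \<otimes> y) = y"
    by (simp flip: m_assoc)
  have c2: "\<And>x y. x \<in> carrier K \<Longrightarrow> y \<in> carrier K \<Longrightarrow> inv x \<otimes> (x \<otimes> y) = y"
    by (simp flip: m_assoc)
  have multH: "\<And>a b c d. (a, b) \<otimes>\<^bsub>H\<^esub> (c, d) = (a \<otimes> c, b \<otimes> d)" by (simp add: H_def)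
  have oneH: "\<one>\<^bsub>H\<^esub> = (\<one>, \<one>)" by (simp add: H_def)
  have memH: "\<And>x y. (x, y) \<in> carrier H \<longleftrightarrow> x \<in> carrier K \<and> y \<in> carrier K \<and> inv y \<otimes> x \<in> N"
  proof -
    fix x y
    show "(x, y) \<in> carrier H \<longleftrightarrow> x \<in> carrier K \<and> y \<in> carrier K \<and> inv y \<otimes> x \<in> N"
    proof
      assume "(x, y) \<in> carrier H"
      then obtain g n where "x = g \<otimes> n" "y = g" "g \<in> carrier K" "n \<in> N" by (auto simp: H_def)
      then show "x \<in> carrier K \<and> y \<in> carrier K \<and> inv y \<otimes> x \<in> N" using NK c2 by auto
    next
      assume h: "x \<in> carrier K \<and> y \<in> carrier K \<and> inv y \<otimes> x \<in> N"
      then have "x = y \<otimes> (inv y \<otimes> x)" using c1 by simp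
      then show "(x, y) \<in> carrier H" using h by (auto simp: H_def)
    qed
  qed
  have carrH: "\<And>p. p \<in> carrier H \<Longrightarrow> fst p \<in> carrier K \<and> snd p \<in> carrier K \<and> inv (snd p) \<otimes> fst p \<in> N"
    using memH by (metis prod.collapse)
  have DH: "\<And>g. g \<in> carrier K \<Longrightarrow> (g, g) \<in> carrier H" using memH N1 by simp
  have AH: "\<And>n. n \<in> N \<Longrightarrow> (n, \<one>) \<in> carrier H" using memH NK by auto
  have mclosed: "\<And>p q. p \<in> carrier H \<Longrightarrow> q \<in> carrier H \<Longrightarrow> p \<otimes>\<^bsub>H\<^esub> q \<in> carrier H"
  proof -
    fix p q assume p: "p \<in> carrier H" and q: "q \<in> carrier H"
    obtain a b c d where pq: "p = (a, b)" "q = (c, d)" by fastforce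
    have h: "a \<in> carrier K" "b \<in> carrier K" "inv b \<otimes> a \<in> N" "c \<in> carrier K" "d \<in> carrier K" "inv d \<otimes> c \<in> N"
      using p q pq memH by auto
    have e: "inv (b \<otimes> d) \<otimes> (a \<otimes> c) = (inv d \<otimes> ((inv b \<otimes> a) \<otimes> d)) \<otimes> (inv d \<otimes> c)"
      using h by (simp add: m_assoc inv_mult_group c1)
    have "inv (b \<otimes> d) \<otimes> (a \<otimes> c) \<in> N" unfolding e using h Nm Nc' by blast
    then show "p \<otimes>\<^bsub>H\<^esub> q \<in> carrier H" using pq h memH multH by simp
  qed
  have grpH: "group H"
  proof (rule groupI)
    show "\<one>\<^bsub>H\<^esub> \<in> carrier H" using oneH DH by simp
  next
    fix x y assume "x \<in> carrier H" "y \<in> carrier H" then show "x \<otimes>\<^bsub>H\<^esub> y \<in> carrier H" by (rule mclosed)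
  next
    fix x y z assume "x \<in> carrier H" "y \<in> carrier H" "z \<in> carrier H"
    then show "x \<otimes>\<^bsub>H\<^esub> y \<otimes>\<^bsub>H\<^esub> z = x \<otimes>\<^bsub>H\<^esub> (y \<otimes>\<^bsub>H\<^esub> z)"
      by (cases x; cases y; cases z) (simp add: memH multH m_assoc)
  next
    fix x assume "x \<in> carrier H" then show "\<one>\<^bsub>H\<^esub> \<otimes>\<^bsub>H\<^esub> x = x"
      by (cases x) (simp add: memH multH oneH)
  next
    fix x assume x: "x \<in> carrier H"
    obtain a b where ab: "x = (a, b)" by fastforce
    have h: "a \<in> carrier K" "b \<in> carrier K" "inv b \<otimes> a \<in> N" using x ab memH by auto
    have e: "inv (inv b) \<otimes> inv a = b \<otimes> inv (inv b \<otimes> a) \<otimes> inv b"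
      using h by (simp add: m_assoc inv_mult_group)
    have "(inv a, inv b) \<in> carrier H" using memH h e Nc Ni by simp
    moreover have "(inv a, inv b) \<otimes>\<^bsub>H\<^esub> x = \<one>\<^bsub>H\<^esub>" using ab h multH oneH by simp
    ultimately show "\<exists>y\<in>carrier H. y \<otimes>\<^bsub>H\<^esub> x = \<one>\<^bsub>H\<^esub>" by blast
  qed
  have GH: "\<And>g n. g \<in> carrier K \<Longrightarrow> n \<in> N \<Longrightarrow> (g \<otimes> n, g) \<in> carrier H"
    using memH NK c2 by auto
  have one_in: "(\<one>, \<one>) \<in> carrier H" using DH by simp
  show ?thesis
  proof (intro allI impI)
    fix \<omega> assume om: "cocycle2 H \<omega>"
    have omn: "\<And>x y. x \<in> carrier H \<Longrightarrow> y \<in> carrier H \<Longrightarrow> cmod (\<omega> x y) = 1"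
      using om unfolding cocycle2_def by blast
    have omz: "\<And>x y. x \<in> carrier H \<Longrightarrow> y \<in> carrier H \<Longrightarrow> \<omega> x y \<noteq> 0"
      using omn by force
    have omc: "\<And>x y z. x \<in> carrier H \<Longrightarrow> y \<in> carrier H \<Longrightarrow> z \<in> carrier H \<Longrightarrow>
        \<omega> x y * \<omega> (x \<otimes>\<^bsub>H\<^esub> y) z = \<omega> x (y \<otimes>\<^bsub>H\<^esub> z) * \<omega> y z"
      using om unfolding cocycle2_def by blast
    define c where "c = \<omega> (\<one>, \<one>) (\<one>, \<one>)"
    have cz: "c \<noteq> 0" unfolding c_def using omz one_in by blast
    have cn: "cmod c = 1" unfolding c_def using omn one_in by blast
    have rone: "\<And>x. x \<in> carrier H \<Longrightarrow> x \<otimes>\<^bsub>H\<^esub> (\<one>, \<one>) = x"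
      using carrH multH by (metis prod.collapse r_one)
    have lone: "\<And>x. x \<in> carrier H \<Longrightarrow> (\<one>, \<one>) \<otimes>\<^bsub>H\<^esub> x = x"
      using carrH multH by (metis prod.collapse l_one)
    have oR: "\<And>x. x \<in> carrier H \<Longrightarrow> \<omega> x (\<one>, \<one>) = c"
    proof -
      fix x assume x: "x \<in> carrier H"
      have "\<omega> x (\<one>, \<one>) * \<omega> x (\<one>, \<one>) = \<omega> x (\<one>, \<one>) * c"
        using omc[OF x one_in one_in] rone[OF x] rone[OF one_in] unfolding c_def by simp
      then show "\<omega> x (\<one>, \<one>) = c" using omz[OF x one_in] by simp
    qed
    have oL: "\<And>x. x \<in> carrier H \<Longrightarrow> \<omega> (\<one>, \<one>) x = c"
    proof -
      fix x assume x: "x \<in> carrier H"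
      have "c * \<omega> (\<one>, \<one>) x = \<omega> (\<one>, \<one>) x * \<omega> (\<one>, \<one>) x"
        using omc[OF one_in one_in x] lone[OF x] lone[OF one_in] unfolding c_def by simp
      then show "\<omega> (\<one>, \<one>) x = c" using omz[OF one_in x] by simp
    qed
    define \<mu> where "\<mu> p = \<omega> (snd p, snd p) (inv (snd p) \<otimes> fst p, \<one>) / c ^ 2" for p
    define \<psi> where "\<psi> x y = \<omega> x y * \<mu> x * \<mu> y / \<mu> (x \<otimes>\<^bsub>H\<^esub> y)" for x y
    have mun: "\<forall>x\<in>carrier H. cmod (\<mu> x) = 1"
    proof
      fix x assume x: "x \<in> carrier H"
      have "(snd x, snd x) \<in> carrier H" "(inv (snd x) \<otimes> fst x, \<one>) \<in> carrier H"
        using carrH[OF x] DH AH by auto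
      then show "cmod (\<mu> x) = 1" unfolding \<mu>_def using omn cn by (simp add: norm_divide norm_power)
    qed
    have coc: "cocycle2 H \<psi>" unfolding \<psi>_def by (rule coboundary_cocycle[OF grpH om mun])
    have coh: "cohomologous H \<omega> \<psi>" unfolding cohomologous_def \<psi>_def using mun by blast
    have psc: "\<And>x y z. x \<in> carrier H \<Longrightarrow> y \<in> carrier H \<Longrightarrow> z \<in> carrier H \<Longrightarrow>
        \<psi> x y * \<psi> (x \<otimes>\<^bsub>H\<^esub> y) z = \<psi> x (y \<otimes>\<^bsub>H\<^esub> z) * \<psi> y z"
      using coc unfolding cocycle2_def by blast
    have P1: "\<And>g n. g \<in> carrier K \<Longrightarrow> n \<in> N \<Longrightarrow> \<psi> (g, g) (n, \<one>) = 1"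
    proof -
      fix g n assume g: "g \<in> carrier K" and n: "n \<in> N"
      have nK: "n \<in> carrier K" using n NK by blast
      have a: "\<mu> (g, g) = c / c^2" unfolding \<mu>_def using oR[OF DH[OF g]] g by simp
      have b: "\<mu> (n, \<one>) = c / c^2" unfolding \<mu>_def using oL[OF AH[OF n]] nK by simp
      have d: "\<mu> ((g, g) \<otimes>\<^bsub>H\<^esub> (n, \<one>)) = \<omega> (g, g) (n, \<one>) / c^2"
        unfolding \<mu>_def using g nK multH c2 by simp
      have z: "\<omega> (g, g) (n, \<one>) \<noteq> 0" using omz DH AH g n by blast
      show "\<psi> (g, g) (n, \<one>) = 1" unfolding \<psi>_def a b d using z cz
        by (simp add: field_simps power2_eq_square)
    qed
    have invH: "\<And>k. k \<in> carrier K \<Longrightarrow> inv\<^bsub>H\<^esub> (k, k) = (inv k, inv k)"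
      using group.inv_equality[OF grpH] DH multH oneH by simp
    show "\<exists>\<psi>. cocycle2 H \<psi> \<and> cohomologous H \<omega> \<psi> \<and>
              (\<forall>g\<in>carrier K. \<forall>k\<in>carrier K. \<forall>n\<in>N. \<forall>m\<in>N.
                 \<psi> (g \<otimes> n, g) (k \<otimes> m, k)
                 = cnj (beta H \<psi> (k, k) (n, \<one>))
                   * \<psi> (inv k \<otimes> n \<otimes> k, \<one>) (m, \<one>)
                   * \<psi> (g, g) (k, k))"
    proof (intro exI conjI ballI)
      show "cocycle2 H \<psi>" by (rule coc)
      show "cohomologous H \<omega> \<psi>" by (rule coh)
      fix g k n m assume g: "g \<in> carrier K" and k: "k \<in> carrier K" and n: "n \<in> N" and m: "m \<in> N"
      have nK: "n \<in> carrier K" and mK: "m \<in> carrier K" using n m NK by auto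
      define n' where "n' = inv k \<otimes> (n \<otimes> k)"
      have n'N: "n' \<in> N" unfolding n'_def using Nc' k n by blast
      have n'K: "n' \<in> carrier K" using n'N NK by blast
      have n'mN: "n' \<otimes> m \<in> N" using Nm n'N m by blast
      have I1: "\<psi> (g, g) (n, \<one>) * \<psi> (g \<otimes> n, g) (k \<otimes> m, k)
          = \<psi> (g, g) (n \<otimes> (k \<otimes> m), k) * \<psi> (n, \<one>) (k \<otimes> m, k)"
        using psc[OF DH[OF g] AH[OF n] GH[OF k m]] g k nK mK by (simp add: multH m_assoc)
      have I2: "\<psi> (g, g) (k, k) * \<psi> (g \<otimes> k, g \<otimes> k) (n' \<otimes> m, \<one>)
          = \<psi> (g, g) (n \<otimes> (k \<otimes> m), k) * \<psi> (k, k) (n' \<otimes> m, \<one>)"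
        using psc[OF DH[OF g] DH[OF k] AH[OF n'mN]] g k nK mK n'K
        by (simp add: multH m_assoc n'_def c1)
      have I3: "\<psi> (n, \<one>) (k, k) * \<psi> (n \<otimes> k, k) (m, \<one>)
          = \<psi> (n, \<one>) (k \<otimes> m, k) * \<psi> (k, k) (m, \<one>)"
        using psc[OF AH[OF n] DH[OF k] AH[OF m]] k nK mK by (simp add: multH)
      have I4: "\<psi> (k, k) (n', \<one>) * \<psi> (n \<otimes> k, k) (m, \<one>)
          = \<psi> (k, k) (n' \<otimes> m, \<one>) * \<psi> (n', \<one>) (m, \<one>)"
        using psc[OF DH[OF k] AH[OF n'N] AH[OF m]] k nK mK n'K
        by (simp add: multH m_assoc n'_def c1)
      have Q: "\<psi> (g \<otimes> k, g \<otimes> k) (n' \<otimes> m, \<one>) = 1" "\<psi> (k, k) (n' \<otimes> m, \<one>) = 1"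
        "\<psi> (g, g) (n, \<one>) = 1" "\<psi> (k, k) (m, \<one>) = 1" "\<psi> (k, k) (n', \<one>) = 1"
        using P1 g k n m n'N n'mN by auto
      have bet: "beta H \<psi> (k, k) (n, \<one>) = cnj (\<psi> (n, \<one>) (k, k))"
        unfolding beta_def using invH[OF k] k nK multH Q(5)
        by (simp add: m_assoc n'_def)
      have e: "inv k \<otimes> n \<otimes> k = n'" unfolding n'_def using k nK by (simp add: m_assoc)
      show "\<psi> (g \<otimes> n, g) (k \<otimes> m, k)
                 = cnj (beta H \<psi> (k, k) (n, \<one>))
                   * \<psi> (inv k \<otimes> n \<otimes> k, \<one>) (m, \<one>)
                   * \<psi> (g, g) (k, k)"
        unfolding bet e using I1 I2 I3 I4 Q by (simp add: mult.commute mult.left_commute)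
    qed
  qed
qed

theorem claim2:
  fixes K :: "('a, 'b) monoid_scheme" and N :: "'a set" and H :: "('a \<times> 'a) monoid"
  assumes "group K" and "finite (carrier K)" and "N \<lhd> K"
  defines "H \<equiv> (K \<times>\<times> K)\<lparr>carrier := {(g \<otimes>\<^bsub>K\<^esub> n, g) | g n. g \<in> carrier K \<and> n \<in> N}\<rparr>"
  shows "\<forall>\<omega>. cocycle2 H \<omega> \<longrightarrow>
           (\<exists>\<psi>. cocycle2 H \<psi> \<and> cohomologous H \<omega> \<psi> \<and>
              (\<forall>g\<in>carrier K. \<forall>k\<in>carrier K. \<forall>n\<in>N. \<forall>m\<in>N.
                 \<psi> (g \<otimes>\<^bsub>K\<^esub> n, g) (k \<otimes>\<^bsub>K\<^esub> m, k)
                 = cnj (beta H \<psi> (k, k) (n, \<one>\<^bsub>K\<^esub>))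
                   * \<psi> (inv\<^bsub>K\<^esub> k \<otimes>\<^bsub>K\<^esub> n \<otimes>\<^bsub>K\<^esub> k, \<one>\<^bsub>K\<^esub>) (m, \<one>\<^bsub>K\<^esub>)
                   * \<psi> (g, g) (k, k)))"
  unfolding H_def by (rule main_lemma[OF assms(1) assms(3)])

end
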